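(* Let $\mu$ be a Borel probability measure on $\mathbb{R}^m$ and let $\nu=\sum_{i=1}^k a_i\delta_{x_i}$ with $k\in\mathbb{N}$, $x_i\in\mathbb{R}^m$, $a_i>0$, $\sum_{i=1}^k a_i=1$. Then $D_0(\mu*\nu)=D_0(\mu)$.
   Context: $\delta_x$ is the Dirac measure at $x$. The convolution $\mu*\nu$ is the push-forward of $\mu\times\nu$ under $(x,y)\mapsto x+y$. For a finite Borel measure $\lambda$, $e_n(\lambda)=\exp\inf\{\int\log d(x,A)\,d\lambda(x):A\subset\mathbb{R}^m,\ \mathrm{Card}(A)\le n\}$ and the quantization dimension of order zero is $D_0(\lambda)=\lim_{n\to\infty}\frac{\log n}{-\log e_n(\lambda)}$; throughout it is assumed that these quantization dimensions exist whenever they occur. *)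

theory Defs
  imports "HOL-Analysis.Analysis" "HOL-Probability.Probability"
begin

definition eln :: "real \<Rightarrow> ereal" where
  "eln d = (if d \<le> 0 then -\<infinity> else ereal (ln d))"

text \<open>Integral of an ereal-valued function as positive part minus negative part
  (with the ereal convention infinity - infinity = infinity).\<close>
definition ereal_integral :: "'a measure \<Rightarrow> ('a \<Rightarrow> ereal) \<Rightarrow> ereal" where
  "ereal_integral M f =
     enn2ereal (\<integral>\<^sup>+ x. e2ennreal (max 0 (f x)) \<partial>M)
   - enn2ereal (\<integral>\<^sup>+ x. e2ennreal (max 0 (- f x)) \<partial>M)"

definition log_quant_error :: "'a::euclidean_space measure \<Rightarrow> nat \<Rightarrow> ereal" where
  "log_quant_error L n =
     (INF A \<in> {A :: 'a set. finite A \<and> A \<noteq> {} \<and> card A \<le> n}.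
        ereal_integral L (\<lambda>x. eln (infdist x A)))"

definition quant_error :: "'a::euclidean_space measure \<Rightarrow> nat \<Rightarrow> ereal" where
  "quant_error L n = (case log_quant_error L n of
      ereal r \<Rightarrow> ereal (exp r) | PInfty \<Rightarrow> \<infinity> | MInfty \<Rightarrow> 0)"

definition D0_seq :: "'a::euclidean_space measure \<Rightarrow> nat \<Rightarrow> ereal" where
  "D0_seq L n = ereal (ln (real n)) / (- log_quant_error L n)"

definition has_quant_dim0 :: "'a::euclidean_space measure \<Rightarrow> ereal \<Rightarrow> bool" where
  "has_quant_dim0 L D \<longleftrightarrow> (D0_seq L \<longlonglongrightarrow> D)"

definition discrete_measure :: "nat \<Rightarrow> (nat \<Rightarrow> real) \<Rightarrow> (nat \<Rightarrow> 'a::topological_space) \<Rightarrow> 'a measure" where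
  "discrete_measure k a x =
     measure_of UNIV (sets borel) (\<lambda>A. ennreal (\<Sum>i<k. a i * indicator A (x i)))"

end

theory Submission
  imports Defs
begin


lemma div_mono_aux:
  fixes y z :: ereal and l :: real
  assumes "l > 0" "y \<le> z" "z \<le> 0 \<or> 0 < y"
  shows "ereal l / (- y) \<le> ereal l / (- z)"
  using assms
  by (cases y; cases z) (auto simp: divide_ereal_def field_simps intro: mult_left_mono)

lemma ratio_lim: "k \<ge> 1 \<Longrightarrow> (\<lambda>n. ereal (ln (real (k * n)) / ln (real n))) \<longlonglongrightarrow> 1"
proof -
  assume k: "k \<ge> 1"
  have ln: "filterlim (\<lambda>n. ln (real n)) at_top sequentially"
    using filterlim_compose[OF ln_at_top filterlim_real_sequentially] by simp
  have "(\<lambda>n. 1 + ln (real k) / ln (real n)) \<longlonglongrightarrow> 1 + 0"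
    by (intro tendsto_add tendsto_const tendsto_divide_0[OF tendsto_const] filterlim_at_top_imp_at_infinity ln)
  moreover have "eventually (\<lambda>n. 1 + ln (real k) / ln (real n) = ln (real (k * n)) / ln (real n)) sequentially"
    using eventually_ge_at_top[of 2]
  proof eventually_elim
    case (elim n)
    then have "ln (real n) > 0" by simp
    then show ?case using k elim by (simp add: ln_mult field_simps)
  qed
  ultimately have "(\<lambda>n. ln (real (k * n)) / ln (real n)) \<longlonglongrightarrow> 1"
    using tendsto_cong by fastforce
  then show ?thesis by (simp add: one_ereal_def tendsto_ereal)
qed

lemma limit_part:
  fixes F G :: "nat \<Rightarrow> ereal"
  assumes k: "k \<ge> 1"
    and Fa: "\<And>m n. m \<le> n \<Longrightarrow> F n \<le> F m" and Ga: "\<And>m n. m \<le> n \<Longrightarrow> G n \<le> G m"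
    and FG: "\<And>n. F n \<le> G n" and GF: "\<And>n. G (k * n) \<le> F n"
    and LF: "(\<lambda>n. ereal (ln (real n)) / (- F n)) \<longlonglongrightarrow> D"
    and LG: "(\<lambda>n. ereal (ln (real n)) / (- G n)) \<longlonglongrightarrow> D'"
  shows "D' = D"
proof -
  define c where "c n = ln (real (k * n)) / ln (real n)" for n
  have "\<exists>N\<ge>2. \<forall>n\<ge>N. (G n \<le> 0 \<or> 0 < F n) \<and> (F n \<le> 0 \<or> 0 < G (k * n))"
  proof (cases "\<exists>N. F N \<le> 0")
    case True
    then obtain N where N: "F N \<le> 0" by auto
    show ?thesis
    proof (rule exI[of _ "k * N + 2"], rule conjI)
      show "2 \<le> k * N + 2" by simp
      show "\<forall>n\<ge>k * N + 2. (G n \<le> 0 \<or> 0 < F n) \<and> (F n \<le> 0 \<or> 0 < G (k * n))"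
      proof (intro allI impI)
      fix n assume n: "k * N + 2 \<le> n"
      have "G n \<le> G (k * N)" using n by (intro Ga) simp
      also have "\<dots> \<le> F N" by (rule GF)
      finally have "G n \<le> 0" using N by simp
      moreover have "F n \<le> 0"
        using Fa[of N n] N n k by (metis dual_order.trans le_add1 le_trans mult_le_mono1 mult_1)
      ultimately show "(G n \<le> 0 \<or> 0 < F n) \<and> (F n \<le> 0 \<or> 0 < G (k * n))" by simp
      qed
    qed
  next
    case False
    then have "\<forall>n. 0 < F n" by (auto simp: not_le)
    then show ?thesis using FG by (metis le_refl order.strict_trans2)
  qed
  then obtain N where N: "N \<ge> 2" "\<And>n. n \<ge> N \<Longrightarrow> (G n \<le> 0 \<or> 0 < F n) \<and> (F n \<le> 0 \<or> 0 < G (k * n))"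
    by blast
  have le1: "D \<le> D'"
  proof (rule LIMSEQ_le[OF LF LG])
    show "\<exists>N. \<forall>n\<ge>N. ereal (ln (real n)) / - F n \<le> ereal (ln (real n)) / - G n"
    proof (intro exI[of _ N] allI impI)
      fix n assume n: "N \<le> n"
      then have "ln (real n) > 0" using N by simp
      then show "ereal (ln (real n)) / - F n \<le> ereal (ln (real n)) / - G n"
        using div_mono_aux[OF _ FG] N(2)[OF n] by blast
    qed
  qed
  have sub: "(\<lambda>n. ereal (ln (real (k * n))) / (- G (k * n))) \<longlonglongrightarrow> D'"
  proof -
    have "filterlim (\<lambda>n. k * n) sequentially sequentially"
      using k by (intro filterlim_subseq) (auto simp: strict_mono_def)
    from filterlim_compose[OF LG this] show ?thesis by (simp add: o_def)
  qed
  have prod: "(\<lambda>n. ereal (c n) * (ereal (ln (real n)) / (- F n))) \<longlonglongrightarrow> 1 * D"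
    by (rule tendsto_mult_ereal[OF ratio_lim[OF k, folded c_def] LF]) auto
  have le2: "D' \<le> D"
  proof -
    have "D' \<le> 1 * D"
    proof (rule LIMSEQ_le[OF sub prod])
      show "\<exists>N. \<forall>n\<ge>N. ereal (ln (real (k * n))) / - G (k * n) \<le> ereal (c n) * (ereal (ln (real n)) / - F n)"
      proof (intro exI[of _ N] allI impI)
        fix n assume n: "N \<le> n"
        then have ln0: "ln (real n) > 0" using N by simp
        have "n \<le> k * n" using k by simp
        then have "real (k * n) > 1" using n N by linarith
        then have lnk: "ln (real (k * n)) > 0" by simp
        have "ereal (ln (real (k * n))) / - G (k * n) \<le> ereal (ln (real (k * n))) / - F n"
          using div_mono_aux[OF lnk GF] N(2)[OF n] by blast
        also have "\<dots> = ereal (c n) * (ereal (ln (real n)) / - F n)"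
          using ln0 by (simp add: c_def divide_ereal_def mult.assoc[symmetric])
        finally show "ereal (ln (real (k * n))) / - G (k * n) \<le> ereal (c n) * (ereal (ln (real n)) / - F n)" .
      qed
    qed
    then show ?thesis by simp
  qed
  from le1 le2 show ?thesis by simp
qed



lemma discrete_eq:
  assumes "\<And>i. i < k \<Longrightarrow> a i \<ge> 0"
  shows "discrete_measure k a (x :: nat \<Rightarrow> 'a::topological_space) = distr (density (count_space {..<k}) (\<lambda>i. ennreal (a i))) borel x"
    (is "_ = ?N")
proof -
  have "?N = measure_of (space ?N) (sets ?N) (emeasure ?N)" by (rule measure_of_of_measure[symmetric])
  also have "\<dots> = measure_of UNIV (sets borel) (emeasure ?N)" by simp
  also have "\<dots> = discrete_measure k a x"
    unfolding discrete_measure_def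
  proof (rule measure_of_eq)
    show "sets borel \<subseteq> Pow UNIV" by simp
    fix A :: "'a set" assume "A \<in> sigma_sets UNIV (sets borel)"
    then have A: "A \<in> sets borel" by (metis sets.sigma_sets_eq space_borel)
    have "emeasure ?N A = (\<integral>\<^sup>+ i. indicator A (x i) \<partial>density (count_space {..<k}) (\<lambda>i. ennreal (a i)))"
      using A by (simp add: emeasure_distr nn_integral_indicator[symmetric] nn_integral_distr del: nn_integral_indicator)
    also have "\<dots> = (\<Sum>i<k. ennreal (a i) * indicator A (x i))"
      by (simp add: nn_integral_density nn_integral_count_space_finite)
    also have "\<dots> = (\<Sum>i<k. ennreal (a i * indicator A (x i)))"
      using assms by (intro sum.cong) (auto simp: indicator_def)
    also have "\<dots> = ennreal (\<Sum>i<k. a i * indicator A (x i))"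
      using assms by (intro sum_ennreal) auto
    finally show "emeasure ?N A = ennreal (\<Sum>i<k. a i * indicator A (x i))" .
  qed
  finally show ?thesis ..
qed

lemma conv_nn:
  fixes M :: "'a::ordered_euclidean_space measure" and x :: "nat \<Rightarrow> 'a"
  assumes "finite_measure M" "sets M = sets borel" "\<And>i. i < k \<Longrightarrow> a i \<ge> 0"
    and h[measurable]: "h \<in> borel_measurable borel"
  shows "(\<integral>\<^sup>+ y. h y \<partial>(M \<star> discrete_measure k a x)) = (\<Sum>i<k. ennreal (a i) * (\<integral>\<^sup>+ z. h (z + x i) \<partial>M))"
proof -
  let ?N = "distr (density (count_space {..<k}) (\<lambda>i. ennreal (a i))) borel x"
  have N: "discrete_measure k a x = ?N" using assms(3) by (rule discrete_eq)
  have fin: "finite_measure ?N"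
    by (intro finite_measureI) (simp add: emeasure_distr emeasure_density nn_integral_count_space_finite)
  have "(\<integral>\<^sup>+ y. h y \<partial>(M \<star> ?N)) = (\<integral>\<^sup>+ z. \<integral>\<^sup>+ y. h (z + y) \<partial>?N \<partial>M)"
    by (rule nn_integral_convolution) (use assms fin in auto)
  also have "\<dots> = (\<integral>\<^sup>+ z. (\<Sum>i<k. ennreal (a i) * h (z + x i)) \<partial>M)"
    by (intro nn_integral_cong) (simp add: nn_integral_distr nn_integral_density nn_integral_count_space_finite)
  also have "\<dots> = (\<Sum>i<k. (\<integral>\<^sup>+ z. ennreal (a i) * h (z + x i) \<partial>M))"
    using assms(2) by (intro nn_integral_sum) (auto simp: measurable_cong_sets[OF assms(2) refl])
  also have "\<dots> = (\<Sum>i<k. ennreal (a i) * (\<integral>\<^sup>+ z. h (z + x i) \<partial>M))"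
    using assms(2) by (intro sum.cong refl nn_integral_cmult) (auto simp: measurable_cong_sets[OF assms(2) refl])
  finally show ?thesis using N by simp
qed

lemma infdist_shift:
  fixes z c :: "'a::real_normed_vector"
  shows "infdist (z + c) B = infdist z ((\<lambda>b. b - c) ` B)"
  unfolding infdist_def by (simp add: image_image dist_norm algebra_simps)

lemma eln_mono: "d \<le> e \<Longrightarrow> eln d \<le> eln e"
  unfolding eln_def by auto

lemma eln_measurable[measurable]: "eln \<in> borel_measurable borel"
  unfolding eln_def by measurable

lemma comb_lower:
  fixes P N :: "nat \<Rightarrow> ennreal" and c :: ereal
  assumes a: "\<And>i. i < k \<Longrightarrow> a i > 0" and s: "(\<Sum>i<k. a i) = 1"
    and c: "\<And>i. i < k \<Longrightarrow> c \<le> enn2ereal (P i) - enn2ereal (N i)"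
  shows "c \<le> enn2ereal (\<Sum>i<k. ennreal (a i) * P i) - enn2ereal (\<Sum>i<k. ennreal (a i) * N i)"
proof (cases "\<exists>j<k. P j = \<infinity>")
  case True
  then obtain j where j: "j < k" "P j = \<infinity>" by auto
  have "ennreal (a j) * P j \<le> (\<Sum>i<k. ennreal (a i) * P i)"
    using j by (intro member_le_sum) auto
  moreover have "ennreal (a j) * P j = \<infinity>" using j a[OF j(1)] by (simp add: ennreal_mult_eq_top_iff)
  ultimately have "(\<Sum>i<k. ennreal (a i) * P i) = \<infinity>" by (simp add: top_unique)
  then show ?thesis by (simp only: ) simp
next
  case False
  note PF = False
  show ?thesis
  proof (cases "\<exists>j<k. N j = \<infinity>")
    case True
    then obtain j where j: "j < k" "N j = \<infinity>" by auto
    have "P j \<noteq> \<infinity>" using PF j by auto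
    then have "c = -\<infinity>" using c[OF j(1)] j(2)
      by (cases "P j") auto
    then show ?thesis by simp
  next
    case False
    define p where "p i = enn2real (P i)" for i
    define n where "n i = enn2real (N i)" for i
    have Pp: "P i = ennreal (p i)" "p i \<ge> 0" if "i < k" for i
      using PF that unfolding p_def by (auto simp: less_top)
    have Nn: "N i = ennreal (n i)" "n i \<ge> 0" if "i < k" for i
      using False that unfolding n_def by (auto simp: less_top)
    have k: "0 < k" using s by (cases k) auto
    have c': "c \<le> ereal (p i - n i)" if "i < k" for i
      using c[OF that] Pp[OF that] Nn[OF that] by simp
    show ?thesis
    proof (cases c)
      case (real r)
      have r: "r \<le> p i - n i" if "i < k" for i using c'[OF that] real by simp
      have "(\<Sum>i<k. ennreal (a i) * P i) = ennreal (\<Sum>i<k. a i * p i)"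
        using Pp a by (subst sum_ennreal[symmetric]) (auto intro!: sum.cong simp: ennreal_mult less_imp_le)
      moreover have "(\<Sum>i<k. ennreal (a i) * N i) = ennreal (\<Sum>i<k. a i * n i)"
        using Nn a by (subst sum_ennreal[symmetric]) (auto intro!: sum.cong simp: ennreal_mult less_imp_le)
      moreover have "r \<le> (\<Sum>i<k. a i * p i) - (\<Sum>i<k. a i * n i)"
      proof -
        have "r = (\<Sum>i<k. a i * r)" using s by (simp add: sum_distrib_right[symmetric])
        also have "\<dots> \<le> (\<Sum>i<k. a i * (p i - n i))"
          using a r by (intro sum_mono mult_left_mono) (auto simp: less_imp_le)
        also have "\<dots> = (\<Sum>i<k. a i * p i) - (\<Sum>i<k. a i * n i)"
          by (simp add: right_diff_distrib sum_subtractf)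
        finally show ?thesis .
      qed
      moreover have "0 \<le> (\<Sum>i<k. a i * p i)" "0 \<le> (\<Sum>i<k. a i * n i)"
        using a Pp Nn by (auto intro!: sum_nonneg simp: less_imp_le)
      ultimately show ?thesis using real by (simp add: enn2ereal_ennreal)
    next
      case PInf
      then show ?thesis using c'[OF k] by simp
    next
      case MInf
      then show ?thesis by simp
    qed
  qed
qed

lemma comb_upper:
  fixes P N P' N' :: "nat \<Rightarrow> ennreal" and p n :: ennreal
  assumes a: "\<And>i. i < k \<Longrightarrow> a i \<ge> 0" and s: "(\<Sum>i<k. a i) = 1"
    and P: "\<And>i. i < k \<Longrightarrow> P i \<le> p" and N: "\<And>i. i < k \<Longrightarrow> n \<le> N i"
  shows "enn2ereal (\<Sum>i<k. ennreal (a i) * P i) - enn2ereal (\<Sum>i<k. ennreal (a i) * N i) \<le> enn2ereal p - enn2ereal n"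
proof -
  have one: "(\<Sum>i<k. ennreal (a i)) = 1" using a s by (subst sum_ennreal) auto
  have "(\<Sum>i<k. ennreal (a i) * P i) \<le> (\<Sum>i<k. ennreal (a i) * p)"
    using P by (intro sum_mono mult_left_mono) auto
  also have "\<dots> = p" using one by (simp add: sum_distrib_right[symmetric])
  finally have 1: "(\<Sum>i<k. ennreal (a i) * P i) \<le> p" .
  have "n = (\<Sum>i<k. ennreal (a i) * n)" using one by (simp add: sum_distrib_right[symmetric])
  also have "\<dots> \<le> (\<Sum>i<k. ennreal (a i) * N i)"
    using N by (intro sum_mono mult_left_mono) auto
  finally have 2: "n \<le> (\<Sum>i<k. ennreal (a i) * N i)" .
  show ?thesis using 1 2 by (intro ereal_minus_mono) (auto simp: less_eq_ennreal.rep_eq[symmetric])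
qed


theorem lemma3p10:
  fixes \<mu> :: "(real ^ 'm) measure"
    and k :: nat and a :: "nat \<Rightarrow> real" and x :: "nat \<Rightarrow> real ^ 'm"
    and D D' :: ereal
  assumes "prob_space \<mu>" and "sets \<mu> = sets borel"
    and "\<And>i. i < k \<Longrightarrow> a i > 0"
    and "(\<Sum>i<k. a i) = 1"
    and "has_quant_dim0 \<mu> D"
    and "has_quant_dim0 (\<mu> \<star> discrete_measure k a x) D'"
  shows "D' = D"
proof -
  have finM: "finite_measure \<mu>" using assms(1) unfolding prob_space_def by simp
  note sM = assms(2)
  have apos: "\<And>i. i < k \<Longrightarrow> a i \<ge> 0" using assms(3) by (simp add: less_imp_le)
  have k: "k \<ge> 1" using assms(4) by (cases k) auto
  define C where "C = (\<mu> \<star> discrete_measure k a x)"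
  define F where "F = log_quant_error \<mu>"
  define G where "G = log_quant_error C"
  define Pm where "Pm B = (\<integral>\<^sup>+ z. e2ennreal (max 0 (eln (infdist z B))) \<partial>\<mu>)" for B
  define Nm where "Nm B = (\<integral>\<^sup>+ z. e2ennreal (max 0 (- eln (infdist z B))) \<partial>\<mu>)" for B
  define S where "S n = {A :: (real ^ 'm) set. finite A \<and> A \<noteq> {} \<and> card A \<le> n}" for n
  have infm: "(\<lambda>y. infdist y B) \<in> borel_measurable borel" for B :: "(real ^ 'm) set"
    by (intro borel_measurable_continuous_onI continuous_intros)
  have m1: "(\<lambda>y. e2ennreal (max 0 (eln (infdist y B)))) \<in> borel_measurable borel" for B :: "(real ^ 'm) set"
    using infm[of B] by measurable
  have m2: "(\<lambda>y. e2ennreal (max 0 (- eln (infdist y B)))) \<in> borel_measurable borel" for B :: "(real ^ 'm) set"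
    using infm[of B] by measurable
  have muI: "ereal_integral \<mu> (\<lambda>z. eln (infdist z A)) = enn2ereal (Pm A) - enn2ereal (Nm A)" for A
    by (simp add: ereal_integral_def Pm_def Nm_def)
  have shift: "ereal_integral C (\<lambda>y. eln (infdist y B)) =
      enn2ereal (\<Sum>i<k. ennreal (a i) * Pm ((\<lambda>b. b - x i) ` B))
    - enn2ereal (\<Sum>i<k. ennreal (a i) * Nm ((\<lambda>b. b - x i) ` B))" for B
    unfolding ereal_integral_def C_def
    by (simp add: conv_nn[OF finM sM apos m1] conv_nn[OF finM sM apos m2] Pm_def Nm_def infdist_shift)
  have FG: "F n \<le> G n" for n
    unfolding F_def G_def log_quant_error_def
  proof (rule INF_greatest)
    fix B assume B: "B \<in> {A :: (real ^ 'm) set. finite A \<and> A \<noteq> {} \<and> card A \<le> n}"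
    have "(INF A\<in>{A :: (real ^ 'm) set. finite A \<and> A \<noteq> {} \<and> card A \<le> n}. ereal_integral \<mu> (\<lambda>x. eln (infdist x A)))
      \<le> enn2ereal (Pm ((\<lambda>b. b - x i) ` B)) - enn2ereal (Nm ((\<lambda>b. b - x i) ` B))" for i
      unfolding muI[symmetric]
      using B by (intro INF_lower) (auto intro: order.trans[OF card_image_le])
    then show "(INF A\<in>{A :: (real ^ 'm) set. finite A \<and> A \<noteq> {} \<and> card A \<le> n}. ereal_integral \<mu> (\<lambda>x. eln (infdist x A)))
      \<le> ereal_integral C (\<lambda>x. eln (infdist x B))"
      unfolding shift by (intro comb_lower[OF assms(3,4)])
  qed
  have GF: "G (k * n) \<le> F n" for n
    unfolding F_def G_def log_quant_error_def
  proof (rule INF_greatest)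
    fix A assume A: "A \<in> {A :: (real ^ 'm) set. finite A \<and> A \<noteq> {} \<and> card A \<le> n}"
    define B where "B = (\<Union>i<k. (\<lambda>b. b + x i) ` A)"
    have "B \<in> {A :: (real ^ 'm) set. finite A \<and> A \<noteq> {} \<and> card A \<le> k * n}"
    proof -
      have "card B \<le> (\<Sum>i<k. card ((\<lambda>b. b + x i) ` A))" unfolding B_def by (rule card_UN_le) simp
      also have "\<dots> \<le> (\<Sum>i<k. n)" using A by (intro sum_mono order.trans[OF card_image_le]) auto
      finally have "card B \<le> k * n" by simp
      moreover have "B \<noteq> {}" using A k unfolding B_def by (auto dest: spec[of _ 0])
      moreover have "finite B" using A unfolding B_def by auto
      ultimately show ?thesis by simp
    qed
    then have "(INF A\<in>{A :: (real ^ 'm) set. finite A \<and> A \<noteq> {} \<and> card A \<le> k * n}. ereal_integral C (\<lambda>x. eln (infdist x A)))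
       \<le> ereal_integral C (\<lambda>x. eln (infdist x B))" by (rule INF_lower)
    also have "\<dots> \<le> enn2ereal (Pm A) - enn2ereal (Nm A)"
      unfolding shift
    proof (rule comb_upper[OF apos assms(4)])
      fix i assume i: "i < k"
      have sub: "A \<subseteq> (\<lambda>b. b - x i) ` B"
      proof
        fix y assume "y \<in> A"
        then have "y + x i \<in> B" using i unfolding B_def by auto
        then show "y \<in> (\<lambda>b. b - x i) ` B" by (rule rev_image_eqI) simp
      qed
      have le: "eln (infdist z ((\<lambda>b. b - x i) ` B)) \<le> eln (infdist z A)" for z
        using A by (intro eln_mono infdist_mono[OF sub]) auto
      show "Pm ((\<lambda>b. b - x i) ` B) \<le> Pm A" unfolding Pm_def
        using le by (intro nn_integral_mono e2ennreal_mono) (auto intro: max.mono le_max_iff_disj[THEN iffD2] order.trans[OF _ max.cobounded2])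
      show "Nm A \<le> Nm ((\<lambda>b. b - x i) ` B)" unfolding Nm_def
        using le by (intro nn_integral_mono e2ennreal_mono) (auto intro: max.mono order.trans[OF _ max.cobounded2] ereal_minus_le_minus[THEN iffD2])
    qed
    also have "\<dots> = ereal_integral \<mu> (\<lambda>x. eln (infdist x A))" by (rule muI[symmetric])
    finally show "(INF A\<in>{A :: (real ^ 'm) set. finite A \<and> A \<noteq> {} \<and> card A \<le> k * n}. ereal_integral C (\<lambda>x. eln (infdist x A)))
       \<le> ereal_integral \<mu> (\<lambda>x. eln (infdist x A))" .
  qed
  have Fa: "F n' \<le> F m'" if "m' \<le> n'" for m' n'
    unfolding F_def log_quant_error_def using that by (intro INF_superset_mono) auto
  have Ga: "G n' \<le> G m'" if "m' \<le> n'" for m' n'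
    unfolding G_def log_quant_error_def using that by (intro INF_superset_mono) auto
  show ?thesis
    by (rule limit_part[where F=F and G=G, OF k Fa Ga FG GF])
       (use assms(5,6) in \<open>simp_all add: has_quant_dim0_def D0_seq_def[abs_def] F_def G_def C_def\<close>)
qed

end
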